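(* Let $B\in\mathbb{C}^{n\times n}$ be a Hermitian positive definite matrix with eigenvalues $\sigma_1\ge\sigma_2\ge\dots\ge\sigma_n>0$ and corresponding orthonormal eigenvectors $v_1,\dots,v_n$. Let $1\le k<l<n$, and set $V_k=[v_1,\dots,v_k]$, $V_{l\backslash k}=[v_{k+1},\dots,v_l]$, $V_l^{\perp}=[v_{l+1},\dots,v_n]$. Let $X\in\mathbb{C}^{n\times k}$ satisfy $X^*X=I_k$, and write \[ X=[V_k,V_{l\backslash k},V_l^{\perp}]\begin{bmatrix}X_k\\ X_{l\backslash k}\\ X_l^{\perp}\end{bmatrix},\qquad X_k\in\mathbb{C}^{k\times k},\ X_{l\backslash k}\in\mathbb{C}^{(l-k)\times k},\ X_l^{\perp}\in\mathbb{C}^{(n-l)\times k}, \] where $X_k$ is assumed nonsingular. Then, provided $\tan\angle(V_k,X)\neq 0$, \[ \frac{\tan\angle(V_k,BX)}{\tan\angle(V_k,X)}\le\frac{\sigma_{l+1}}{\sigma_k}+\frac{\sigma_{k+1}-\sigma_{l+1}}{\sigma_k}\cdot\frac{\bigl\lVert X_{l\backslash k}X_k^{-1}\bigr\rVert_2}{\left\lVert\begin{bmatrix}X_{l\backslash k}\\ X_l^{\perp}\end{bmatrix}X_k^{-1}\right\rVert_2}. \]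
   Context: For $n\times k$ matrices $V_k$ (with orthonormal columns) and $Z$ of full column rank, $\angle(V_k,Z)$ denotes the largest principal angle between $\operatorname{span}\{V_k\}$ and $\operatorname{span}\{Z\}$. In the setting of the claim, writing $Z$ in the eigenbasis as $Z=[V_k,V_{l\backslash k},V_l^{\perp}][Z_k;Z_{l\backslash k};Z_l^{\perp}]$ with $Z_k$ nonsingular, one has $\tan\angle(V_k,Z)=\bigl\lVert [Z_{l\backslash k};Z_l^{\perp}]Z_k^{-1}\bigr\rVert_2$. $\lVert\cdot\rVert_2$ is the spectral norm. *)

theory Defs
  imports "Jordan_Normal_Form.Schur_Decomposition"
begin

definition vnorm2 :: "complex vec \<Rightarrow> real" where
  "vnorm2 v = sqrt (\<Sum>i<dim_vec v. (cmod (v $ i))^2)"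

definition spec_norm :: "complex mat \<Rightarrow> real" where
  "spec_norm A = Sup {vnorm2 (A *\<^sub>v x) | x. x \<in> carrier_vec (dim_col A) \<and> vnorm2 x = 1}"

definition minv :: "complex mat \<Rightarrow> complex mat" where
  "minv A = (SOME C. C \<in> carrier_mat (dim_row A) (dim_row A) \<and>
                      A * C = 1\<^sub>m (dim_row A) \<and> C * A = 1\<^sub>m (dim_row A))"

definition blk :: "complex mat \<Rightarrow> nat \<Rightarrow> nat \<Rightarrow> nat \<Rightarrow> nat \<Rightarrow> complex mat" where
  "blk A r0 p c0 q = mat p q (\<lambda>(i,j). A $$ (i + r0, j + c0))"

definition hermitian_mat :: "complex mat \<Rightarrow> bool" where
  "hermitian_mat A \<longleftrightarrow> A \<in> carrier_mat (dim_row A) (dim_row A) \<and> mat_adjoint A = A"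

definition posdef_mat :: "complex mat \<Rightarrow> bool" where
  "posdef_mat A \<longleftrightarrow> (\<forall>x \<in> carrier_vec (dim_row A). x \<noteq> 0\<^sub>v (dim_row A) \<longrightarrow>
       Re (conjugate x \<bullet> (A *\<^sub>v x)) > 0)"

(* Cosine of the largest principal angle between span U (U with orthonormal
   columns) and span Z (same number of columns, full column rank):
   cos theta_max = min over unit w in span Z of the norm of the orthogonal
   projection of w onto span U, which equals norm (U^* w). *)
definition cos_max_angle :: "complex mat \<Rightarrow> complex mat \<Rightarrow> real" where
  "cos_max_angle U Z = Inf {vnorm2 (mat_adjoint U *\<^sub>v w) | w.
      (\<exists>c \<in> carrier_vec (dim_col Z). w = Z *\<^sub>v c) \<and> vnorm2 w = 1}"

definition max_angle :: "complex mat \<Rightarrow> complex mat \<Rightarrow> real" where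
  "max_angle U Z = arccos (cos_max_angle U Z)"

definition tan_angle :: "complex mat \<Rightarrow> complex mat \<Rightarrow> real" where
  "tan_angle U Z = tan (max_angle U Z)"

end

theory Submission
  imports Defs
begin

definition nsq :: "complex vec \<Rightarrow> real" where
  "nsq v = (\<Sum>i<dim_vec v. (cmod (v $ i))^2)"

lemma nsq_nonneg: "nsq v \<ge> 0" unfolding nsq_def by (simp add: sum_nonneg)

lemma vnorm2_nsq: "vnorm2 v = sqrt (nsq v)" unfolding vnorm2_def nsq_def ..

lemma adj_dim[simp]: "dim_row (mat_adjoint A) = dim_col A" "dim_col (mat_adjoint A) = dim_row A"
  unfolding mat_adjoint_def by auto

lemma adj_index[simp]: "i < dim_col A \<Longrightarrow> j < dim_row A \<Longrightarrow> mat_adjoint A $$ (i,j) = cnj (A $$ (j,i))"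
  unfolding mat_adjoint_def by (simp add: mat_of_rows_index)

lemma adj_carrier: "A \<in> carrier_mat m n \<Longrightarrow> mat_adjoint A \<in> carrier_mat n m"
  by auto

lemma blk_dim[simp]: "dim_row (blk A r0 p c0 q) = p" "dim_col (blk A r0 p c0 q) = q"
  unfolding blk_def by auto

lemma blk_index[simp]: "i < p \<Longrightarrow> j < q \<Longrightarrow> blk A r0 p c0 q $$ (i,j) = A $$ (i + r0, j + c0)"
  unfolding blk_def by auto

lemma cscalar_nsq: "v \<bullet>c v = complex_of_real (nsq v)"
  unfolding scalar_prod_def nsq_def
  by (simp add: complex_norm_square[symmetric] atLeast0LessThan)

lemma blk_mult_vec:
  assumes "i < p" "i + r0 < dim_row A" "dim_vec x = dim_col A"
  shows "(blk A r0 p 0 (dim_col A) *\<^sub>v x) $ i = (A *\<^sub>v x) $ (i + r0)"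
  using assms by (simp add: scalar_prod_def row_def)

lemma adj_mult_vec:
  assumes A: "(A::complex mat) \<in> carrier_mat m n" and u: "u \<in> carrier_vec n" and w: "w \<in> carrier_vec m"
  shows "(A *\<^sub>v u) \<bullet>c w = u \<bullet>c (mat_adjoint A *\<^sub>v w)"
proof -
  have "(A *\<^sub>v u) \<bullet>c w = (\<Sum>i<m. (\<Sum>j<n. A $$ (i,j) * u $ j) * cnj (w $ i))"
    using A u w by (simp add: scalar_prod_def atLeast0LessThan row_def)
  also have "\<dots> = (\<Sum>i<m. \<Sum>j<n. A $$ (i,j) * u $ j * cnj (w $ i))"
    by (simp add: sum_distrib_right)
  also have "\<dots> = (\<Sum>j<n. \<Sum>i<m. A $$ (i,j) * u $ j * cnj (w $ i))"
    by (rule sum.swap)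
  also have "\<dots> = (\<Sum>j<n. u $ j * cnj (\<Sum>i<m. cnj (A $$ (i,j)) * w $ i))"
    by (simp add: sum_distrib_left mult_ac)
  also have "\<dots> = u \<bullet>c (mat_adjoint A *\<^sub>v w)"
    using A u w by (simp add: scalar_prod_def atLeast0LessThan row_def)
  finally show ?thesis .
qed

lemma nsq_isometry:
  assumes A: "(A::complex mat) \<in> carrier_mat m n" and AA: "mat_adjoint A * A = 1\<^sub>m n" and u: "u \<in> carrier_vec n"
  shows "nsq (A *\<^sub>v u) = nsq u"
proof -
  have "complex_of_real (nsq (A *\<^sub>v u)) = (A *\<^sub>v u) \<bullet>c (A *\<^sub>v u)" by (simp add: cscalar_nsq)
  also have "\<dots> = u \<bullet>c (mat_adjoint A *\<^sub>v (A *\<^sub>v u))"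
    using A u by (intro adj_mult_vec[OF A u]) (auto intro: mult_mat_vec_carrier)
  also have "mat_adjoint A *\<^sub>v (A *\<^sub>v u) = u"
    using AA A u by (metis adj_carrier assoc_mult_mat_vec one_mult_mat_vec)
  finally show ?thesis by (simp add: cscalar_nsq)
qed

lemma nsq_smult: "nsq (a \<cdot>\<^sub>v x) = (cmod a)^2 * nsq x"
  unfolding nsq_def by (simp add: norm_mult power_mult_distrib sum_distrib_left)

lemma nsq_zero: "nsq x = 0 \<Longrightarrow> x = 0\<^sub>v (dim_vec x)"
  unfolding nsq_def by (intro eq_vecI) (auto simp: sum_nonneg_eq_0_iff)

lemma nsq_entry_le: "j < dim_vec x \<Longrightarrow> (cmod (x $ j))^2 \<le> nsq x"
  unfolding nsq_def by (rule member_le_sum) auto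

lemma nsq_unit: "1 \<le> k \<Longrightarrow> nsq (unit_vec k 0) = 1"
proof -
  assume k: "1 \<le> k"
  have "nsq (unit_vec k 0) = (\<Sum>i<k. if i = 0 then 1 else 0)"
    unfolding nsq_def unit_vec_def by (intro sum.cong) auto
  also have "\<dots> = 1" using k by (simp add: sum.delta)
  finally show ?thesis .
qed

lemma spec_bdd:
  assumes T: "T \<in> carrier_mat m k"
  shows "bdd_above {vnorm2 (T *\<^sub>v x) | x. x \<in> carrier_vec (dim_col T) \<and> vnorm2 x = 1}"
proof -
  define r where "r i = (\<Sum>j<k. cmod (T $$ (i,j)))" for i
  have "vnorm2 (T *\<^sub>v x) \<le> sqrt (\<Sum>i<m. (r i)^2)" if x: "x \<in> carrier_vec k" "vnorm2 x = 1" for x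
  proof -
    have nx: "nsq x = 1" using x by (simp add: vnorm2_nsq)
    have xj: "cmod (x $ j) \<le> 1" if "j < k" for j
    proof -
      have "(cmod (x $ j))^2 \<le> 1" using nsq_entry_le[of j x] that x nx by auto
      thus ?thesis by (simp add: power_le_one_iff abs_le_square_iff[symmetric])
    qed
    have "cmod ((T *\<^sub>v x) $ i) \<le> r i" if i: "i < m" for i
    proof -
      have "(T *\<^sub>v x) $ i = (\<Sum>j<k. T $$ (i,j) * x $ j)"
        using T x i by (simp add: scalar_prod_def atLeast0LessThan row_def)
      also have "cmod \<dots> \<le> (\<Sum>j<k. cmod (T $$ (i,j) * x $ j))" by (rule norm_sum)
      also have "\<dots> \<le> r i" unfolding r_def
        by (intro sum_mono) (auto simp: norm_mult intro: mult_left_le xj)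
      finally show ?thesis .
    qed
    hence "nsq (T *\<^sub>v x) \<le> (\<Sum>i<m. (r i)^2)"
      unfolding nsq_def using T by (auto intro!: sum_mono power_mono)
    thus ?thesis by (simp add: vnorm2_nsq)
  qed
  thus ?thesis using T unfolding bdd_above_def by auto
qed

lemma spec_upper:
  assumes T: "T \<in> carrier_mat m k" and x: "x \<in> carrier_vec k" "nsq x = 1"
  shows "vnorm2 (T *\<^sub>v x) \<le> spec_norm T"
  unfolding spec_norm_def
  by (rule cSup_upper[OF _ spec_bdd[OF T]]) (use T x in \<open>auto simp: vnorm2_nsq\<close>)

lemma spec_least:
  assumes T: "T \<in> carrier_mat m k" and k: "1 \<le> k"
    and M: "\<And>x. x \<in> carrier_vec k \<Longrightarrow> nsq x = 1 \<Longrightarrow> vnorm2 (T *\<^sub>v x) \<le> M"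
  shows "spec_norm T \<le> M"
  unfolding spec_norm_def
proof (rule cSup_least)
  have "nsq (unit_vec k 0) = 1" using k by (rule nsq_unit)
  thus "{vnorm2 (T *\<^sub>v x) |x. x \<in> carrier_vec (dim_col T) \<and> vnorm2 x = 1} \<noteq> {}"
    using T by (auto simp: vnorm2_nsq intro!: exI[of _ "unit_vec k 0"])
qed (use T M in \<open>auto simp: vnorm2_nsq\<close>)

lemma spec_nonneg:
  assumes T: "T \<in> carrier_mat m k" and k: "1 \<le> k"
  shows "spec_norm T \<ge> 0"
proof -
  have "nsq (unit_vec k 0) = 1" using k by (rule nsq_unit)
  hence "vnorm2 (T *\<^sub>v unit_vec k 0) \<le> spec_norm T" by (intro spec_upper[OF T]) auto
  moreover have "vnorm2 (T *\<^sub>v unit_vec k 0) \<ge> 0" by (simp add: vnorm2_nsq nsq_nonneg)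
  ultimately show ?thesis by linarith
qed

lemma spec_scale:
  assumes T: "T \<in> carrier_mat m k" and x: "x \<in> carrier_vec k"
  shows "nsq (T *\<^sub>v x) \<le> (spec_norm T)^2 * nsq x"
proof (cases "nsq x = 0")
  case True
  then have "x = 0\<^sub>v k" using nsq_zero[of x] x by auto
  then have "T *\<^sub>v x = 0\<^sub>v m" using T by auto
  then show ?thesis using True by (simp add: nsq_def)
next
  case False
  then have p: "nsq x > 0" using nsq_nonneg[of x] by auto
  define a where "a = 1 / sqrt (nsq x)"
  have a2: "(cmod (complex_of_real a))^2 = 1 / nsq x" using p by (simp add: a_def norm_divide power_divide)
  have "nsq (complex_of_real a \<cdot>\<^sub>v x) = 1" unfolding nsq_smult a2 using p by simp
  hence "vnorm2 (T *\<^sub>v (complex_of_real a \<cdot>\<^sub>v x)) \<le> spec_norm T"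
    using x by (intro spec_upper[OF T]) auto
  moreover have "T *\<^sub>v (complex_of_real a \<cdot>\<^sub>v x) = complex_of_real a \<cdot>\<^sub>v (T *\<^sub>v x)"
    using T x by (rule mult_mat_vec)
  ultimately have "sqrt (nsq (complex_of_real a \<cdot>\<^sub>v (T *\<^sub>v x))) \<le> spec_norm T"
    unfolding vnorm2_nsq by simp
  hence "sqrt (nsq (T *\<^sub>v x) / nsq x) \<le> spec_norm T"
    unfolding nsq_smult a2 by simp
  moreover have q: "nsq (T *\<^sub>v x) / nsq x \<ge> 0" using p nsq_nonneg by simp
  ultimately have "(sqrt (nsq (T *\<^sub>v x) / nsq x))^2 \<le> (spec_norm T)^2"
    by (intro power_mono) auto
  hence "nsq (T *\<^sub>v x) / nsq x \<le> (spec_norm T)^2" using q by simp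
  thus ?thesis using p by (simp add: divide_le_eq mult.commute)
qed



lemma sum_split_shift: fixes k m :: nat shows "sum f {..<k + m} = sum f {..<k} + sum (\<lambda>i. f (i + k)) {..<m}"
  by (induct m) (auto simp: add.commute add.left_commute)

lemma tan_arccos_inv: assumes "N \<ge> 0" shows "tan (arccos (1 / sqrt (1 + N^2))) = N"
proof -
  let ?L = "1 / sqrt (1 + N^2)"
  have p: "sqrt (1 + N^2) > 0" by (simp add: add_pos_nonneg)
  have L0: "0 < ?L" using p by simp
  have L1: "?L \<le> 1" using p by (auto simp: divide_le_eq)
  have L01: "-1 \<le> ?L" "?L \<le> 1" using L0 L1 by linarith+
  have h: "1 + N^2 \<noteq> 0" using zero_le_power2[of N] by linarith
  have e1: "1 - ?L^2 = 1 - 1 / (1 + N^2)" by (simp add: power_divide)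
  have e3: "1 / (1 + N^2) + N^2 / (1 + N^2) = 1" by (simp only: add_divide_distrib[symmetric] divide_self[OF h])
  have e2: "1 - ?L^2 = N^2 / (1 + N^2)" using e1 e3 by linarith
  have "tan (arccos ?L) = sin (arccos ?L) / cos (arccos ?L)" by (simp add: tan_def)
  also have "cos (arccos ?L) = ?L" using L01 by (intro cos_arccos) auto
  also have "sin (arccos ?L) = sqrt (1 - ?L^2)" using L01 by (intro sin_arccos) auto
  also have "1 - ?L^2 = N^2 / (1 + N^2)" by (rule e2)
  also have "sqrt (N^2 / (1 + N^2)) / ?L = N" using assms p
    by (simp add: real_sqrt_divide)
  finally show ?thesis .
qed

lemma tan_formula:
  fixes V Z T :: "complex mat"
  assumes V: "V \<in> carrier_mat n n" and VV: "mat_adjoint V * V = 1\<^sub>m n"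
    and VV': "V * mat_adjoint V = 1\<^sub>m n"
    and Z: "Z \<in> carrier_mat n k" and k: "1 \<le> k" and kn: "k \<le> n"
    and surj: "\<And>y. y \<in> carrier_vec k \<Longrightarrow> \<exists>c\<in>carrier_vec k. blk (mat_adjoint V * Z) 0 k 0 k *\<^sub>v c = y"
    and T: "T \<in> carrier_mat (n-k) k"
    and TZ: "T * blk (mat_adjoint V * Z) 0 k 0 k = blk (mat_adjoint V * Z) k (n-k) 0 k"
  shows "tan_angle (blk V 0 n 0 k) Z = spec_norm T"
proof -
  define Y where "Y = mat_adjoint V * Z"
  define Zk where "Zk = blk Y 0 k 0 k"
  define Zr where "Zr = blk Y k (n-k) 0 k"
  define U where "U = blk V 0 n 0 k"
  have Yc: "Y \<in> carrier_mat n k" using V Z unfolding Y_def by auto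
  have Zkc: "Zk \<in> carrier_mat k k" and Zrc: "Zr \<in> carrier_mat (n-k) k"
    unfolding Zk_def Zr_def by auto
  have F1: "mat_adjoint U *\<^sub>v (Z *\<^sub>v c) = Zk *\<^sub>v c" if c: "c \<in> carrier_vec k" for c
  proof (rule eq_vecI)
    show "dim_vec (mat_adjoint U *\<^sub>v (Z *\<^sub>v c)) = dim_vec (Zk *\<^sub>v c)" unfolding U_def Zk_def by simp
    fix i assume "i < dim_vec (Zk *\<^sub>v c)"
    hence i: "i < k" unfolding Zk_def by simp
    have "(Zk *\<^sub>v c) $ i = (Y *\<^sub>v c) $ i"
      using blk_mult_vec[of i k 0 Y c] i Yc c kn unfolding Zk_def by auto
    also have "Y *\<^sub>v c = mat_adjoint V *\<^sub>v (Z *\<^sub>v c)" unfolding Y_def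
      using V Z c by (intro assoc_mult_mat_vec) auto
    finally show "(mat_adjoint U *\<^sub>v (Z *\<^sub>v c)) $ i = (Zk *\<^sub>v c) $ i"
      using i kn V Z c unfolding U_def by (simp add: scalar_prod_def row_def)
  qed
  have F2: "nsq (Z *\<^sub>v c) = nsq (Zk *\<^sub>v c) + nsq (Zr *\<^sub>v c)" if c: "c \<in> carrier_vec k" for c
  proof -
    have Yv: "Y *\<^sub>v c = mat_adjoint V *\<^sub>v (Z *\<^sub>v c)" unfolding Y_def
      using V Z c by (intro assoc_mult_mat_vec) auto
    have "V *\<^sub>v (Y *\<^sub>v c) = (V * mat_adjoint V) *\<^sub>v (Z *\<^sub>v c)" unfolding Yv
      using V Z c by (intro assoc_mult_mat_vec[symmetric]) auto
    also have "\<dots> = Z *\<^sub>v c" using VV' Z c by auto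
    finally have "nsq (Z *\<^sub>v c) = nsq (Y *\<^sub>v c)"
      using nsq_isometry[OF V VV, of "Y *\<^sub>v c"] Yc c by auto
    also have "\<dots> = (\<Sum>i<k + (n-k). (cmod ((Y *\<^sub>v c) $ i))^2)"
      unfolding nsq_def using Yc kn by simp
    also have "\<dots> = (\<Sum>i<k. (cmod ((Y *\<^sub>v c) $ i))^2) + (\<Sum>i<n-k. (cmod ((Y *\<^sub>v c) $ (i+k)))^2)"
      by (rule sum_split_shift)
    also have "(\<Sum>i<k. (cmod ((Y *\<^sub>v c) $ i))^2) = nsq (Zk *\<^sub>v c)"
      unfolding nsq_def Zk_def using blk_mult_vec[of _ k 0 Y c] Yc c kn by (auto intro!: sum.cong)
    also have "(\<Sum>i<n-k. (cmod ((Y *\<^sub>v c) $ (i+k)))^2) = nsq (Zr *\<^sub>v c)"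
      unfolding nsq_def Zr_def using blk_mult_vec[of _ "n-k" k Y c] Yc c kn by (auto intro!: sum.cong)
    finally show ?thesis .
  qed
  have F3: "Zr *\<^sub>v c = T *\<^sub>v (Zk *\<^sub>v c)" if c: "c \<in> carrier_vec k" for c
    using TZ T Zkc c unfolding Zr_def Zk_def Y_def[symmetric]
    by (metis assoc_mult_mat_vec)
  define N where "N = spec_norm T"
  define L where "L = 1 / sqrt (1 + N^2)"
  have N0: "N \<ge> 0" unfolding N_def by (rule spec_nonneg[OF T k])
  have sp: "sqrt (1 + N^2) > 0" by (simp add: add_pos_nonneg)
  have L0: "L > 0" unfolding L_def using sp by simp
  define S where "S = {vnorm2 (mat_adjoint U *\<^sub>v w) | w. (\<exists>c \<in> carrier_vec (dim_col Z). w = Z *\<^sub>v c) \<and> vnorm2 w = 1}"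
  have cos: "cos_max_angle U Z = Inf S" unfolding cos_max_angle_def S_def ..
  have Smem: "s \<in> S \<longleftrightarrow> (\<exists>c\<in>carrier_vec k. s = vnorm2 (Zk *\<^sub>v c) \<and> nsq (Zk *\<^sub>v c) + nsq (T *\<^sub>v (Zk *\<^sub>v c)) = 1)" for s
  proof
    assume "s \<in> S"
    then obtain c where c: "c \<in> carrier_vec k" and s: "s = vnorm2 (mat_adjoint U *\<^sub>v (Z *\<^sub>v c))"
      and one: "vnorm2 (Z *\<^sub>v c) = 1" unfolding S_def using Z by auto
    have "nsq (Z *\<^sub>v c) = 1" using one unfolding vnorm2_nsq by simp
    thus "\<exists>c\<in>carrier_vec k. s = vnorm2 (Zk *\<^sub>v c) \<and> nsq (Zk *\<^sub>v c) + nsq (T *\<^sub>v (Zk *\<^sub>v c)) = 1"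
      using c s F1[OF c] F2[OF c] F3[OF c] by auto
  next
    assume "\<exists>c\<in>carrier_vec k. s = vnorm2 (Zk *\<^sub>v c) \<and> nsq (Zk *\<^sub>v c) + nsq (T *\<^sub>v (Zk *\<^sub>v c)) = 1"
    then obtain c where c: "c \<in> carrier_vec k" and s: "s = vnorm2 (Zk *\<^sub>v c)"
      and one: "nsq (Zk *\<^sub>v c) + nsq (T *\<^sub>v (Zk *\<^sub>v c)) = 1" by auto
    have "vnorm2 (Z *\<^sub>v c) = 1" unfolding vnorm2_nsq F2[OF c] F3[OF c] one by simp
    moreover have "s = vnorm2 (mat_adjoint U *\<^sub>v (Z *\<^sub>v c))" using s F1[OF c] by simp
    ultimately show "s \<in> S" unfolding S_def using c Z by auto
  qed
  have lower: "s \<ge> L" if sS: "s \<in> S" for s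
  proof -
    obtain c where c: "c \<in> carrier_vec k" and s: "s = vnorm2 (Zk *\<^sub>v c)"
      and one: "nsq (Zk *\<^sub>v c) + nsq (T *\<^sub>v (Zk *\<^sub>v c)) = 1" using sS Smem by auto
    have yc: "Zk *\<^sub>v c \<in> carrier_vec k" using Zkc c by auto
    have "nsq (T *\<^sub>v (Zk *\<^sub>v c)) \<le> N^2 * nsq (Zk *\<^sub>v c)" unfolding N_def by (rule spec_scale[OF T yc])
    hence "1 \<le> (1 + N^2) * nsq (Zk *\<^sub>v c)" using one by (simp add: algebra_simps)
    hence "1 / (1 + N^2) \<le> nsq (Zk *\<^sub>v c)" by (simp add: divide_le_eq mult.commute add_pos_nonneg)
    hence "sqrt (1 / (1 + N^2)) \<le> s" unfolding s vnorm2_nsq by (rule real_sqrt_le_mono)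
    thus ?thesis unfolding L_def by (simp add: real_sqrt_divide)
  qed
  have elem: "1 / sqrt (1 + nsq (T *\<^sub>v x)) \<in> S" if x: "x \<in> carrier_vec k" "nsq x = 1" for x
  proof -
    define q where "q = nsq (T *\<^sub>v x)"
    have q0: "q \<ge> 0" unfolding q_def by (rule nsq_nonneg)
    define a where "a = 1 / sqrt (1 + q)"
    have a2: "(cmod (complex_of_real a))^2 = 1 / (1 + q)" using q0 by (simp add: a_def norm_divide power_divide)
    define y where "y = complex_of_real a \<cdot>\<^sub>v x"
    have yc: "y \<in> carrier_vec k" using x unfolding y_def by auto
    obtain c where c: "c \<in> carrier_vec k" and cy: "Zk *\<^sub>v c = y" using surj[OF yc] unfolding Zk_def Y_def by auto
    have Ty: "T *\<^sub>v y = complex_of_real a \<cdot>\<^sub>v (T *\<^sub>v x)" unfolding y_def using T x(1) by (rule mult_mat_vec)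
    have ny: "nsq y = 1 / (1 + q)" unfolding y_def nsq_smult a2 using x by simp
    have nTy: "nsq (T *\<^sub>v y) = q / (1 + q)" unfolding Ty nsq_smult a2 q_def by simp
    have "nsq y + nsq (T *\<^sub>v y) = 1" unfolding ny nTy using q0 by (simp add: field_simps)
    moreover have "vnorm2 y = 1 / sqrt (1 + q)" unfolding vnorm2_nsq ny by (simp add: real_sqrt_divide)
    ultimately show ?thesis unfolding Smem q_def using c cy by metis
  qed
  have ne: "S \<noteq> {}" using elem[of "unit_vec k 0"] nsq_unit[OF k] by auto
  have bdd: "bdd_below S" unfolding bdd_below_def using lower by auto
  have c0L: "L \<le> Inf S" using ne lower by (intro cInf_greatest) auto
  have c0pos: "Inf S > 0" using c0L L0 by linarith
  have "N \<le> sqrt (1 / (Inf S)^2 - 1)" unfolding N_def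
  proof (rule spec_least[OF T k])
    fix x assume x: "x \<in> carrier_vec k" "nsq x = 1"
    have q0: "nsq (T *\<^sub>v x) \<ge> 0" by (rule nsq_nonneg)
    have "Inf S \<le> 1 / sqrt (1 + nsq (T *\<^sub>v x))" using cInf_lower[OF elem[OF x] bdd] .
    hence "sqrt (1 + nsq (T *\<^sub>v x)) \<le> 1 / Inf S" using c0pos q0
      by (simp add: field_simps add_pos_nonneg)
    hence "(sqrt (1 + nsq (T *\<^sub>v x)))^2 \<le> (1 / Inf S)^2" using q0 by (intro power_mono) auto
    moreover have "(sqrt (1 + nsq (T *\<^sub>v x)))^2 = 1 + nsq (T *\<^sub>v x)" using q0 by simp
    ultimately have "1 + nsq (T *\<^sub>v x) \<le> 1 / (Inf S)^2" using q0 by (simp add: power_divide)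
    hence "nsq (T *\<^sub>v x) \<le> 1 / (Inf S)^2 - 1" by simp
    thus "vnorm2 (T *\<^sub>v x) \<le> sqrt (1 / (Inf S)^2 - 1)" unfolding vnorm2_nsq by (rule real_sqrt_le_mono)
  qed
  hence "N^2 \<le> (sqrt (1 / (Inf S)^2 - 1))^2" using N0 by (intro power_mono) auto
  also have "\<dots> = 1 / (Inf S)^2 - 1"
  proof -
    have u: "unit_vec k 0 \<in> carrier_vec k" "nsq (unit_vec k 0) = 1" using nsq_unit[OF k] by auto
    have "Inf S \<le> 1 / sqrt (1 + nsq (T *\<^sub>v unit_vec k 0))" using cInf_lower[OF elem[OF u] bdd] .
    also have "\<dots> \<le> 1" using nsq_nonneg[of "T *\<^sub>v unit_vec k 0"] by simp
    finally have "Inf S \<le> 1" .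
    hence "(Inf S)^2 \<le> 1" using c0pos by (simp add: power_le_one)
    hence "1 / (Inf S)^2 \<ge> 1" using c0pos by simp
    thus ?thesis by simp
  qed
  finally have "1 + N^2 \<le> 1 / (Inf S)^2" by linarith
  hence "(Inf S)^2 * (1 + N^2) \<le> (Inf S)^2 * (1 / (Inf S)^2)" by (intro mult_left_mono) auto
  also have "\<dots> = 1" using c0pos by simp
  finally have i2: "(Inf S)^2 * (1 + N^2) \<le> 1" .
  have hp: "1 + N^2 > 0" using zero_le_power2[of N] by linarith
  have "(Inf S)^2 \<le> 1 / (1 + N^2)" using i2 hp by (simp add: le_divide_eq)
  hence "(Inf S)^2 \<le> (1 / sqrt (1 + N^2))^2" using hp by (simp add: power_divide)
  moreover have "0 \<le> 1 / sqrt (1 + N^2)" by simp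
  ultimately have "Inf S \<le> L" unfolding L_def by (rule power2_le_imp_le)
  hence "Inf S = L" using c0L by simp
  thus ?thesis unfolding tan_angle_def max_angle_def U_def[symmetric] cos L_def N_def
    using tan_arccos_inv[OF N0[unfolded N_def]] by simp
qed



lemma real_key:
  fixes s t a2 b2 A N z sg :: real
  assumes "0 \<le> s" "s \<le> t" "0 \<le> a2" "0 \<le> b2" "a2 \<le> A^2 * z" "a2 + b2 \<le> N^2 * z"
    "0 \<le> z" "z \<le> 1 / sg^2" "0 < sg" "0 \<le> A" "A \<le> N"
  shows "t^2 * a2 + s^2 * b2 \<le> ((s * N + (t - s) * A) / sg)^2"
proof -
  have "t^2 * a2 + s^2 * b2 = s^2 * (a2 + b2) + (t^2 - s^2) * a2" by (simp add: algebra_simps)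
  also have "\<dots> \<le> s^2 * (N^2 * z) + (t^2 - s^2) * (A^2 * z)"
  proof (intro add_mono mult_left_mono)
    show "0 \<le> t^2 - s^2" using assms by (simp add: power_mono)
  qed (use assms in auto)
  also have "\<dots> \<le> (s * N + (t - s) * A)^2 * z"
  proof -
    have "(s * N + (t - s) * A)^2 - (s^2 * N^2 + (t^2 - s^2) * A^2) = 2 * s * (t - s) * A * (N - A)"
      by (simp add: algebra_simps power2_eq_square)
    also have "\<dots> \<ge> 0" using assms by simp
    finally have "s^2 * N^2 + (t^2 - s^2) * A^2 \<le> (s * N + (t - s) * A)^2" by simp
    hence "(s^2 * N^2 + (t^2 - s^2) * A^2) * z \<le> (s * N + (t - s) * A)^2 * z"
      using assms by (intro mult_right_mono) auto
    thus ?thesis by (simp add: algebra_simps)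
  qed
  also have "\<dots> \<le> (s * N + (t - s) * A)^2 * (1 / sg^2)"
    using assms by (intro mult_left_mono) auto
  also have "\<dots> = ((s * N + (t - s) * A) / sg)^2" by (simp add: power_divide)
  finally show ?thesis .
qed



lemma minv_props:
  assumes "invertible_mat (A::complex mat)" "A \<in> carrier_mat k k"
  shows "minv A \<in> carrier_mat k k" "A * minv A = 1\<^sub>m k" "minv A * A = 1\<^sub>m k"
proof -
  obtain B where AB: "A * B = 1\<^sub>m k" and BA: "B * A = 1\<^sub>m (dim_row B)"
    using assms unfolding invertible_mat_def inverts_mat_def by auto
  have "dim_col (B * A) = k" using assms by auto
  hence rB: "dim_row B = k" using BA by (metis index_one_mat(3))
  have "dim_col (A * B) = k" using AB by simp
  hence "dim_col B = k" by simp
  hence Bc: "B \<in> carrier_mat k k" using rB by auto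
  have ex: "\<exists>C. C \<in> carrier_mat (dim_row A) (dim_row A) \<and> A * C = 1\<^sub>m (dim_row A) \<and> C * A = 1\<^sub>m (dim_row A)"
    using Bc AB BA rB assms by auto
  have "minv A \<in> carrier_mat (dim_row A) (dim_row A) \<and> A * minv A = 1\<^sub>m (dim_row A) \<and> minv A * A = 1\<^sub>m (dim_row A)"
    unfolding minv_def by (rule someI_ex[OF ex])
  thus "minv A \<in> carrier_mat k k" "A * minv A = 1\<^sub>m k" "minv A * A = 1\<^sub>m k" using assms by auto
qed

lemma VB_entry:
  fixes B V X :: "complex mat"
  assumes B: "B \<in> carrier_mat n n" and herm: "hermitian_mat B" and V: "V \<in> carrier_mat n n"
    and eig: "\<And>i. i < n \<Longrightarrow> B *\<^sub>v col V i = complex_of_real (\<sigma> i) \<cdot>\<^sub>v col V i"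
    and X: "X \<in> carrier_mat n k" and i: "i < n" and j: "j < k"
  shows "(mat_adjoint V * (B * X)) $$ (i,j) = complex_of_real (\<sigma> i) * (mat_adjoint V * X) $$ (i,j)"
proof -
  have Bh: "B $$ (m,p) = cnj (B $$ (p,m))" if "m < n" "p < n" for m p
  proof -
    have "mat_adjoint B = B" using herm unfolding hermitian_mat_def by auto
    hence "B $$ (m,p) = mat_adjoint B $$ (m,p)" by simp
    also have "\<dots> = cnj (B $$ (p,m))" using that B by simp
    finally show ?thesis .
  qed
  have ev: "(\<Sum>m<n. B $$ (p,m) * V $$ (m,i)) = complex_of_real (\<sigma> i) * V $$ (p,i)" if p: "p < n" for p
  proof -
    have "(B *\<^sub>v col V i) $ p = (complex_of_real (\<sigma> i) \<cdot>\<^sub>v col V i) $ p" using eig[OF i] by simp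
    thus ?thesis using B V p i by (simp add: scalar_prod_def atLeast0LessThan row_def col_def)
  qed
  have W: "(mat_adjoint V * B) $$ (i,p) = complex_of_real (\<sigma> i) * cnj (V $$ (p,i))" if p: "p < n" for p
  proof -
    have "(mat_adjoint V * B) $$ (i,p) = (\<Sum>m<n. cnj (V $$ (m,i)) * B $$ (m,p))"
      using B V i p by (simp add: scalar_prod_def atLeast0LessThan row_def col_def)
    also have "\<dots> = (\<Sum>m<n. cnj (B $$ (p,m) * V $$ (m,i)))"
    proof (rule sum.cong)
      fix m assume "m \<in> {..<n}"
      hence m: "m < n" by simp
      show "cnj (V $$ (m,i)) * B $$ (m,p) = cnj (B $$ (p,m) * V $$ (m,i))"
        unfolding Bh[OF m p] by (simp add: mult.commute)
    qed simp
    also have "\<dots> = cnj (\<Sum>m<n. B $$ (p,m) * V $$ (m,i))" by simp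
    also have "\<dots> = complex_of_real (\<sigma> i) * cnj (V $$ (p,i))" using ev[OF p] by simp
    finally show ?thesis .
  qed
  have "mat_adjoint V * (B * X) = (mat_adjoint V * B) * X"
    using B V X by (intro assoc_mult_mat[symmetric]) auto
  hence "(mat_adjoint V * (B * X)) $$ (i,j) = (\<Sum>p<n. (mat_adjoint V * B) $$ (i,p) * X $$ (p,j))"
    using B V X i j by (simp add: scalar_prod_def atLeast0LessThan row_def col_def)
  also have "\<dots> = (\<Sum>p<n. complex_of_real (\<sigma> i) * (cnj (V $$ (p,i)) * X $$ (p,j)))"
    using W by (intro sum.cong) auto
  also have "\<dots> = complex_of_real (\<sigma> i) * (mat_adjoint V * X) $$ (i,j)"
    using V X i j by (simp add: scalar_prod_def atLeast0LessThan row_def col_def sum_distrib_left)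
  finally show ?thesis .
qed



theorem theorem5p1:
  fixes n k l :: nat and B V X :: "complex mat" and \<sigma> :: "nat \<Rightarrow> real"
  assumes B: "B \<in> carrier_mat n n" and herm: "hermitian_mat B" and pd: "posdef_mat B"
    and V: "V \<in> carrier_mat n n" and Vunit: "mat_adjoint V * V = 1\<^sub>m n"
    and eig: "\<And>i. i < n \<Longrightarrow> B *\<^sub>v col V i = complex_of_real (\<sigma> i) \<cdot>\<^sub>v col V i"
    and sorted: "\<And>i j. i \<le> j \<Longrightarrow> j < n \<Longrightarrow> \<sigma> j \<le> \<sigma> i"
    and pos: "\<And>i. i < n \<Longrightarrow> \<sigma> i > 0"
    and kl: "1 \<le> k" "k < l" "l < n"
    and X: "X \<in> carrier_mat n k" and Xorth: "mat_adjoint X * X = 1\<^sub>m k"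
    and Xk_nonsing: "invertible_mat (blk (mat_adjoint V * X) 0 k 0 k)"
    and tan_nz: "tan_angle (blk V 0 n 0 k) X \<noteq> 0"
  shows "tan_angle (blk V 0 n 0 k) (B * X) / tan_angle (blk V 0 n 0 k) X
     \<le> \<sigma> l / \<sigma> (k - 1)
        + (\<sigma> k - \<sigma> l) / \<sigma> (k - 1)
          * (spec_norm (blk (mat_adjoint V * X) k (l - k) 0 k * minv (blk (mat_adjoint V * X) 0 k 0 k))
             / spec_norm (blk (mat_adjoint V * X) k (n - k) 0 k * minv (blk (mat_adjoint V * X) 0 k 0 k)))"
proof -
  have k1: "1 \<le> k" and kn: "k \<le> n" using kl by auto
  have VV': "V * mat_adjoint V = 1\<^sub>m n"
    using mat_mult_left_right_inverse[OF adj_carrier[OF V] V Vunit] .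
  define Y where "Y = mat_adjoint V * X"
  define Zk where "Zk = blk Y 0 k 0 k"
  define Zr where "Zr = blk Y k (n-k) 0 k"
  define Mi where "Mi = minv Zk"
  define T where "T = Zr * Mi"
  define T1 where "T1 = blk Y k (l-k) 0 k * Mi"
  have Yc: "Y \<in> carrier_mat n k" unfolding Y_def using V X by auto
  have Zkc: "Zk \<in> carrier_mat k k" and Zrc: "Zr \<in> carrier_mat (n-k) k" unfolding Zk_def Zr_def by auto
  note mp = minv_props[OF Xk_nonsing[folded Y_def, folded Zk_def] Zkc, folded Mi_def]
  have Tc: "T \<in> carrier_mat (n-k) k" unfolding T_def using Zrc mp by auto
  have T1c: "T1 \<in> carrier_mat (l-k) k" unfolding T1_def using mp by auto
  have TZ: "T * Zk = Zr" unfolding T_def using Zrc Zkc mp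
    by (metis assoc_mult_mat right_mult_one_mat)
  have surj: "\<exists>c\<in>carrier_vec k. Zk *\<^sub>v c = y" if y: "y \<in> carrier_vec k" for y
  proof
    show "Mi *\<^sub>v y \<in> carrier_vec k" using mp y by auto
    have "Zk *\<^sub>v (Mi *\<^sub>v y) = (Zk * Mi) *\<^sub>v y" using mp Zkc y by (metis assoc_mult_mat_vec)
    thus "Zk *\<^sub>v (Mi *\<^sub>v y) = y" using mp y by auto
  qed
  have tanX: "tan_angle (blk V 0 n 0 k) X = spec_norm T"
    by (rule tan_formula[OF V Vunit VV' X k1 kn _ Tc])
      (use surj TZ in \<open>auto simp: Y_def Zk_def Zr_def\<close>)
  define Y' where "Y' = mat_adjoint V * (B * X)"
  have Yp: "Y' $$ (i,j) = complex_of_real (\<sigma> i) * Y $$ (i,j)" if "i < n" "j < k" for i j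
    unfolding Y'_def Y_def by (rule VB_entry[OF B herm V eig X that])
  define Zk' where "Zk' = blk Y' 0 k 0 k"
  define Zr' where "Zr' = blk Y' k (n-k) 0 k"
  define T' where "T' = mat (n-k) k (\<lambda>(i,j). complex_of_real (\<sigma> (k+i)) * T $$ (i,j) / complex_of_real (\<sigma> j))"
  have T'c: "T' \<in> carrier_mat (n-k) k" unfolding T'_def by auto
  have sne: "complex_of_real (\<sigma> j) \<noteq> 0" if "j < n" for j using pos[OF that] by simp
  have TZ': "T' * Zk' = Zr'"
  proof (rule eq_matI)
    fix i j assume "i < dim_row Zr'" "j < dim_col Zr'"
    hence i: "i < n - k" and j: "j < k" unfolding Zr'_def by auto
    have "(T' * Zk') $$ (i,j) = (\<Sum>m<k. T' $$ (i,m) * Zk' $$ (m,j))"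
      using i j T'c unfolding Zk'_def by (simp add: scalar_prod_def atLeast0LessThan row_def col_def)
    also have "\<dots> = (\<Sum>m<k. complex_of_real (\<sigma> (k+i)) * (T $$ (i,m) * Zk $$ (m,j)))"
    proof (rule sum.cong)
      fix m assume "m \<in> {..<k}"
      hence m: "m < k" by simp
      have "Zk' $$ (m,j) = complex_of_real (\<sigma> m) * Zk $$ (m,j)"
        unfolding Zk'_def Zk_def using m j kn by (simp add: Yp)
      thus "T' $$ (i,m) * Zk' $$ (m,j) = complex_of_real (\<sigma> (k+i)) * (T $$ (i,m) * Zk $$ (m,j))"
        unfolding T'_def using i m sne[of m] kn by simp
    qed simp
    also have "\<dots> = complex_of_real (\<sigma> (k+i)) * (T * Zk) $$ (i,j)"
      using i j Tc Zkc by (simp add: scalar_prod_def atLeast0LessThan row_def col_def sum_distrib_left)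
    also have "\<dots> = Zr' $$ (i,j)" unfolding TZ Zr'_def Zr_def using i j kn by (simp add: Yp add.commute)
    finally show "(T' * Zk') $$ (i,j) = Zr' $$ (i,j)" .
  qed (use T'c in \<open>auto simp: Zk'_def Zr'_def\<close>)
  have surj': "\<exists>c\<in>carrier_vec k. Zk' *\<^sub>v c = y" if y: "y \<in> carrier_vec k" for y
  proof -
    define w where "w = vec k (\<lambda>i. y $ i / complex_of_real (\<sigma> i))"
    obtain c where c: "c \<in> carrier_vec k" and cw: "Zk *\<^sub>v c = w" using surj[of w] unfolding w_def by auto
    have "Zk' *\<^sub>v c = y"
    proof (rule eq_vecI)
      fix i assume "i < dim_vec y"
      hence i: "i < k" using y by auto
      have "(Zk' *\<^sub>v c) $ i = (\<Sum>m<k. Zk' $$ (i,m) * c $ m)"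
        using i c unfolding Zk'_def by (simp add: scalar_prod_def atLeast0LessThan row_def)
      also have "\<dots> = complex_of_real (\<sigma> i) * (\<Sum>m<k. Zk $$ (i,m) * c $ m)"
        unfolding sum_distrib_left
        by (rule sum.cong) (use i kn in \<open>auto simp: Zk'_def Zk_def Yp\<close>)
      also have "(\<Sum>m<k. Zk $$ (i,m) * c $ m) = (Zk *\<^sub>v c) $ i"
        using i c Zkc by (simp add: scalar_prod_def atLeast0LessThan row_def)
      also have "\<dots> = y $ i / complex_of_real (\<sigma> i)" unfolding cw w_def using i by simp
      finally show "(Zk' *\<^sub>v c) $ i = y $ i" using sne[of i] i kn by simp
    qed (use y in \<open>auto simp: Zk'_def\<close>)
    thus ?thesis using c by auto
  qed
  have BXc: "B * X \<in> carrier_mat n k" using B X by auto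
  have tanBX: "tan_angle (blk V 0 n 0 k) (B * X) = spec_norm T'"
    by (rule tan_formula[OF V Vunit VV' BXc k1 kn _ T'c])
      (use surj' TZ' in \<open>auto simp: Y'_def Zk'_def Zr'_def\<close>)
  define N where "N = spec_norm T"
  define A where "A = spec_norm T1"
  define N' where "N' = spec_norm T'"
  define sg where "sg = \<sigma> (k - 1)"
  define s where "s = \<sigma> l"
  define t where "t = \<sigma> k"
  have N0: "N \<ge> 0" unfolding N_def by (rule spec_nonneg[OF Tc k1])
  have Npos: "N > 0" using N0 tan_nz tanX unfolding N_def by auto
  have A0: "A \<ge> 0" unfolding A_def by (rule spec_nonneg[OF T1c k1])
  have sgpos: "sg > 0" unfolding sg_def using pos kl by auto
  have s0: "0 \<le> s" unfolding s_def using pos[of l] kl by auto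
  have st: "s \<le> t" unfolding s_def t_def using sorted kl by auto
  have T1eq: "T1 = blk T 0 (l-k) 0 k"
  proof (rule eq_matI)
    fix i j assume "i < dim_row (blk T 0 (l-k) 0 k)" "j < dim_col (blk T 0 (l-k) 0 k)"
    hence i: "i < l - k" and j: "j < k" by auto
    show "T1 $$ (i,j) = blk T 0 (l-k) 0 k $$ (i,j)"
      unfolding T1_def T_def Zr_def using i j mp kl
      by (simp add: scalar_prod_def atLeast0LessThan row_def col_def)
  qed (use T1c in auto)
  have T1v: "(T1 *\<^sub>v z) $ i = (T *\<^sub>v z) $ i" if "z \<in> carrier_vec k" "i < l - k" for z i
    using blk_mult_vec[of i "l-k" 0 T z] that Tc kl unfolding T1eq by auto
  have nT1: "nsq (T1 *\<^sub>v z) = (\<Sum>i<l-k. (cmod ((T *\<^sub>v z) $ i))^2)" if z: "z \<in> carrier_vec k" for z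
    unfolding nsq_def using T1c T1v[OF z] by (auto intro!: sum.cong)
  have nT: "nsq (T *\<^sub>v z) = (\<Sum>i<l-k. (cmod ((T *\<^sub>v z) $ i))^2) + (\<Sum>i<n-l. (cmod ((T *\<^sub>v z) $ (i + (l-k))))^2)"
    if z: "z \<in> carrier_vec k" for z
  proof -
    have "nsq (T *\<^sub>v z) = (\<Sum>i<(l-k) + (n-l). (cmod ((T *\<^sub>v z) $ i))^2)"
      unfolding nsq_def using Tc kl by simp
    thus ?thesis by (simp only: sum_split_shift)
  qed
  have AN: "A \<le> N" unfolding A_def
  proof (rule spec_least[OF T1c k1])
    fix x assume x: "x \<in> carrier_vec k" "nsq x = 1"
    have "nsq (T1 *\<^sub>v x) \<le> nsq (T *\<^sub>v x)" unfolding nT[OF x(1)] nT1[OF x(1)]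
      by (simp add: sum_nonneg)
    also have "\<dots> \<le> N^2" using spec_scale[OF Tc x(1)] x(2) unfolding N_def by simp
    finally have "sqrt (nsq (T1 *\<^sub>v x)) \<le> sqrt (N^2)" by (rule real_sqrt_le_mono)
    thus "vnorm2 (T1 *\<^sub>v x) \<le> N" using N0 by (simp add: vnorm2_nsq)
  qed
  have N'b: "N' \<le> (s * N + (t - s) * A) / sg" unfolding N'_def
  proof (rule spec_least[OF T'c k1])
    fix x assume x: "x \<in> carrier_vec k" "nsq x = 1"
    define z where "z = vec k (\<lambda>j. x $ j / complex_of_real (\<sigma> j))"
    have zc: "z \<in> carrier_vec k" unfolding z_def by auto
    have T'x: "(T' *\<^sub>v x) $ i = complex_of_real (\<sigma> (k+i)) * (T *\<^sub>v z) $ i" if i: "i < n - k" for i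
    proof -
      have "(T' *\<^sub>v x) $ i = (\<Sum>j<k. T' $$ (i,j) * x $ j)"
        using i x T'c by (simp add: scalar_prod_def atLeast0LessThan row_def)
      also have "\<dots> = complex_of_real (\<sigma> (k+i)) * (\<Sum>j<k. T $$ (i,j) * z $ j)"
        unfolding sum_distrib_left
        by (rule sum.cong) (use i in \<open>auto simp: T'_def z_def\<close>)
      also have "(\<Sum>j<k. T $$ (i,j) * z $ j) = (T *\<^sub>v z) $ i"
        using i zc Tc by (simp add: scalar_prod_def atLeast0LessThan row_def)
      finally show ?thesis .
    qed
    define a2 where "a2 = (\<Sum>i<l-k. (cmod ((T *\<^sub>v z) $ i))^2)"
    define b2 where "b2 = (\<Sum>i<n-l. (cmod ((T *\<^sub>v z) $ (i + (l-k))))^2)"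
    have "nsq (T' *\<^sub>v x) = (\<Sum>i<(l-k) + (n-l). (\<sigma> (k+i))^2 * (cmod ((T *\<^sub>v z) $ i))^2)"
      unfolding nsq_def using T'c kl T'x by (auto intro!: sum.cong simp: norm_mult power_mult_distrib)
    also have "\<dots> = (\<Sum>i<l-k. (\<sigma> (k+i))^2 * (cmod ((T *\<^sub>v z) $ i))^2)
       + (\<Sum>i<n-l. (\<sigma> (k+(i + (l-k))))^2 * (cmod ((T *\<^sub>v z) $ (i + (l-k))))^2)"
      by (rule sum_split_shift)
    also have "\<dots> \<le> t^2 * a2 + s^2 * b2"
      unfolding a2_def b2_def sum_distrib_left
    proof (intro add_mono sum_mono mult_right_mono)
      fix i assume "i \<in> {..<l-k}"
      hence "k + i < n" "k \<le> k + i" using kl by auto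
      hence "\<sigma> (k+i) \<le> \<sigma> k" "0 < \<sigma> (k+i)" using sorted pos by auto
      thus "(\<sigma> (k+i))^2 \<le> t^2" unfolding t_def by (intro power_mono) auto
    next
      fix i assume "i \<in> {..<n-l}"
      hence "k + (i + (l-k)) < n" "l \<le> k + (i + (l-k))" using kl by auto
      hence "\<sigma> (k + (i + (l-k))) \<le> \<sigma> l" "0 < \<sigma> (k + (i + (l-k)))" using sorted pos by auto
      thus "(\<sigma> (k + (i + (l-k))))^2 \<le> s^2" unfolding s_def by (intro power_mono) auto
    qed auto
    also have "\<dots> \<le> ((s * N + (t - s) * A) / sg)^2"
    proof (rule real_key[OF s0 st])
      show "0 \<le> a2" "0 \<le> b2" unfolding a2_def b2_def by (auto intro: sum_nonneg)
      show "a2 \<le> A^2 * nsq z" unfolding a2_def A_def nT1[OF zc, symmetric] by (rule spec_scale[OF T1c zc])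
      show "a2 + b2 \<le> N^2 * nsq z" unfolding a2_def b2_def N_def nT[OF zc, symmetric] by (rule spec_scale[OF Tc zc])
      show "0 \<le> nsq z" by (rule nsq_nonneg)
      have "nsq z = (\<Sum>j<k. (cmod (x $ j))^2 / (\<sigma> j)^2)"
        unfolding nsq_def z_def by (auto intro!: sum.cong simp: norm_divide power_divide)
      also have "\<dots> \<le> (\<Sum>j<k. (cmod (x $ j))^2 / sg^2)"
      proof (rule sum_mono)
        fix j assume "j \<in> {..<k}"
        hence j: "j \<le> k - 1" "k - 1 < n" using kl by auto
        have "sg \<le> \<sigma> j" unfolding sg_def using sorted[OF j] .
        hence sj: "\<sigma> j > 0" using sgpos by linarith
        have "sg^2 \<le> (\<sigma> j)^2" using sgpos \<open>sg \<le> \<sigma> j\<close> by (intro power_mono) auto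
        thus "(cmod (x $ j))^2 / (\<sigma> j)^2 \<le> (cmod (x $ j))^2 / sg^2"
          using sgpos sj by (intro divide_left_mono) auto
      qed
      also have "\<dots> = nsq x / sg^2" unfolding nsq_def using x by (simp add: sum_divide_distrib)
      finally show "nsq z \<le> 1 / sg^2" using x by simp
    qed (use sgpos A0 AN in auto)
    finally have "sqrt (nsq (T' *\<^sub>v x)) \<le> sqrt (((s * N + (t - s) * A) / sg)^2)" by (rule real_sqrt_le_mono)
    moreover have "s * N + (t - s) * A \<ge> 0" using s0 st N0 A0 by simp
    ultimately show "vnorm2 (T' *\<^sub>v x) \<le> (s * N + (t - s) * A) / sg" using sgpos by (simp add: vnorm2_nsq)
  qed
  have "N' / N \<le> ((s * N + (t - s) * A) / sg) / N" using N'b Npos by (intro divide_right_mono) auto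
  also have "\<dots> = s / sg + (t - s) / sg * (A / N)" using Npos sgpos by (simp add: field_simps)
  finally show ?thesis unfolding tanX tanBX N'_def[symmetric] N_def[symmetric]
    unfolding N_def A_def T_def T1_def Mi_def Zk_def Zr_def Y_def s_def t_def sg_def .
qed


end
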